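(* Let $X=\mathbb{CP}^2\#n\overline{\mathbb{CP}}^2$, $k$ a positive integer and $U_5=\{A\in H_2(X;\mathbb{Z}):\mathrm{ind}(A)\ge2k,\ A\cdot H>0\}$, equipped with the preorder $\ge$ defined below. Then every chain $A_1\ge A_2\ge\cdots$ in $U_5$ stabilizes, i.e. there is $N$ with $A_i=A_N$ for all $i\ge N$.
   Context: $K_0=-3H+E_1+\cdots+E_n$, $\mathrm{ind}(A):=A^2-K_0\cdot A$. Identify $H^2(X;\mathbb{R})$ with $\mathbb{R}^{n+1}$ by $(x_0,\dots,x_n)\leftrightarrow x_0PD(H)-\sum x_iPD(E_i)$. The reduced cone $\mathcal{P}$ is: $0<x_1<x_0$ if $n=1$; $0<x_2\le x_1$, $x_1+x_2<x_0$ if $n=2$; $0<x_n\le\cdots\le x_1$, $x_1+x_2+x_3\le x_0$, $\sum x_i^2<x_0^2$ if $n\ge3$. The $c_1$-nef cone is $\mathcal{P}^{c_1>0}=\{[\omega]\in\mathcal{P}:\omega(3H-E_1-\cdots-E_n)>0\}$. For $A,B\in U_5$, $A\ge B$ means $\omega(A)\ge\omega(B)$ for all $[\omega]\in\mathcal{P}^{c_1>0}$. *)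

theory Defs
  imports Complex_Main
begin

text \<open>A class A in H_2(X;Z) is encoded by its coefficients
  A = (A 0) H + (A 1) E_1 + ... + (A n) E_n, as a function nat => int vanishing beyond n.
  Intersection form: H.H = 1, E_i.E_i = -1, H.E_i = 0.\<close>

definition is_class :: "nat \<Rightarrow> (nat \<Rightarrow> int) \<Rightarrow> bool" where
  "is_class n A \<longleftrightarrow> (\<forall>i>n. A i = 0)"

definition self_int :: "nat \<Rightarrow> (nat \<Rightarrow> int) \<Rightarrow> int" where
  "self_int n A = (A 0)^2 - (\<Sum>i=1..n. (A i)^2)"

text \<open>K_0 = -3H + E_1 + ... + E_n, so K_0.A = -3 (A 0) - sum (A i).\<close>
definition K0_dot :: "nat \<Rightarrow> (nat \<Rightarrow> int) \<Rightarrow> int" where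
  "K0_dot n A = -3 * A 0 - (\<Sum>i=1..n. A i)"

definition ind :: "nat \<Rightarrow> (nat \<Rightarrow> int) \<Rightarrow> int" where
  "ind n A = self_int n A - K0_dot n A"

definition dot_H :: "(nat \<Rightarrow> int) \<Rightarrow> int" where
  "dot_H A = A 0"

text \<open>A cohomology class [omega] = x_0 PD(H) - sum x_i PD(E_i), coordinates x :: nat => real.
  Its pairing with A = a_0 H + sum a_i E_i is x_0 a_0 + sum x_i a_i.\<close>
definition omega_eval :: "nat \<Rightarrow> (nat \<Rightarrow> real) \<Rightarrow> (nat \<Rightarrow> int) \<Rightarrow> real" where
  "omega_eval n x A = x 0 * of_int (A 0) + (\<Sum>i=1..n. x i * of_int (A i))"

definition reduced_cone :: "nat \<Rightarrow> (nat \<Rightarrow> real) \<Rightarrow> bool" where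
  "reduced_cone n x \<longleftrightarrow>
     (if n = 1 then 0 < x 1 \<and> x 1 < x 0
      else if n = 2 then 0 < x 2 \<and> x 2 \<le> x 1 \<and> x 1 + x 2 < x 0
      else 3 \<le> n \<and> 0 < x n \<and> (\<forall>i\<in>{1..<n}. x (Suc i) \<le> x i) \<and>
           x 1 + x 2 + x 3 \<le> x 0 \<and> (\<Sum>i=1..n. (x i)^2) < (x 0)^2)"

text \<open>c_1-nef cone: omega(3H - E_1 - ... - E_n) > 0, i.e. 3 x_0 - sum x_i > 0.\<close>
definition c1_nef_cone :: "nat \<Rightarrow> (nat \<Rightarrow> real) \<Rightarrow> bool" where
  "c1_nef_cone n x \<longleftrightarrow> reduced_cone n x \<and> 3 * x 0 - (\<Sum>i=1..n. x i) > 0"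

definition class_ge :: "nat \<Rightarrow> (nat \<Rightarrow> int) \<Rightarrow> (nat \<Rightarrow> int) \<Rightarrow> bool" where
  "class_ge n A B \<longleftrightarrow> (\<forall>x. c1_nef_cone n x \<longrightarrow> omega_eval n x A \<ge> omega_eval n x B)"

definition U5 :: "nat \<Rightarrow> nat \<Rightarrow> (nat \<Rightarrow> int) set" where
  "U5 n k = {A. is_class n A \<and> ind n A \<ge> 2 * int k \<and> dot_H A > 0}"

end

theory Submission
  imports Defs
begin

definition ev :: "nat \<Rightarrow> (nat \<Rightarrow> int) \<Rightarrow> (nat \<Rightarrow> int) \<Rightarrow> int" where
  "ev n c B = c 0 * B 0 + (\<Sum>i=1..n. c i * B i)"

lemma omega_ev: "omega_eval n (\<lambda>i. of_int (c i)) B = of_int (ev n c B)"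
  by (simp add: omega_eval_def ev_def)

lemma cone_ok:
  fixes c :: "nat \<Rightarrow> int"
  assumes n: "n \<ge> 1" and c0: "c 0 \<ge> 2 * int n + 6"
    and c12: "\<And>i. i \<in> {1..n} \<Longrightarrow> 1 \<le> c i \<and> c i \<le> 2"
    and mono: "\<And>i. i \<in> {1..<n} \<Longrightarrow> c (Suc i) \<le> c i"
  shows "c1_nef_cone n (\<lambda>i. of_int (c i))"
proof -
  have s1: "(\<Sum>i=1..n. (of_int (c i)::real)) \<le> of_nat (card {1..n}) * 2"
    by (rule sum_bounded_above) (use c12 in auto)
  have s2: "(\<Sum>i=1..n. (of_int (c i)::real)^2) \<le> of_nat (card {1..n}) * 4"
  proof (rule sum_bounded_above)
    fix i assume "i \<in> {1..n}"
    then have "1 \<le> c i" "c i \<le> 2" using c12 by auto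
    then have "(of_int (c i)::real)^2 \<le> 2^2" by (intro power_mono) auto
    then show "(of_int (c i)::real)^2 \<le> 4" by simp
  qed
  have c0r: "(of_int (c 0)::real) \<ge> 2 * real n + 6" using c0 by linarith
  have sq: "(of_int (c 0)::real)^2 > 4 * real n"
  proof -
    have "(2 * real n + 6)^2 \<le> (of_int (c 0)::real)^2"
      using c0r by (intro power_mono) auto
    moreover have "(2 * real n + 6)^2 > 4 * real n"
    proof -
      have "(2 * real n + 6)^2 = 4 * (real n)^2 + 24 * real n + 36" by (simp add: power2_eq_square algebra_simps)
      moreover have "(real n)^2 \<ge> 0" by simp
      ultimately show ?thesis by linarith
    qed
    ultimately show ?thesis by linarith
  qed
  have sum3: "3 * (of_int (c 0)::real) - (\<Sum>i=1..n. of_int (c i)) > 0"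
    using s1 c0r by simp
  have red: "reduced_cone n (\<lambda>i. of_int (c i))"
  proof (cases "n = 1")
    case True
    with c12[of 1] c0 show ?thesis by (simp add: reduced_cone_def)
  next
    case F1: False
    show ?thesis
    proof (cases "n = 2")
      case True
      have m2: "c 2 \<le> c 1" using mono[of 1] True by (simp add: eval_nat_numeral)
      with True c12[of 1] c12[of 2] c0 show ?thesis by (simp add: reduced_cone_def)
    next
      case False
      with F1 n have n3: "n \<ge> 3" by auto
      have a: "0 < c n" using c12[of n] n by auto
      have b: "\<forall>i\<in>{1..<n}. (of_int (c (Suc i))::real) \<le> of_int (c i)" using mono by auto
      have d: "c 1 + c 2 + c 3 \<le> c 0" using c12[of 1] c12[of 2] c12[of 3] n3 c0 by auto
      have e: "(\<Sum>i=1..n. (of_int (c i)::real)^2) < (of_int (c 0))^2" using s2 sq by simp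
      show ?thesis using F1 False n3 a b d e
        unfolding reduced_cone_def by simp
    qed
  qed
  show ?thesis unfolding c1_nef_cone_def using red sum3 by simp
qed

lemma coord_lb:
  assumes B: "B \<in> U5 n k" and i: "i \<in> {1..n}"
  shows "B i \<ge> -(B 0 + 1)"
proof -
  have ind: "ind n B \<ge> 0" using B by (auto simp: U5_def)
  have nn: "\<And>t::int. t^2 - t \<ge> 0"
  proof -
    fix t :: int
    show "t^2 - t \<ge> 0"
    proof (cases "t \<le> 0")
      case True
      have "t^2 \<ge> 0" by simp
      with True show ?thesis by linarith
    next
      case False
      then have "t * 1 \<le> t * t" by (intro mult_left_mono) auto
      then show ?thesis by (simp add: power2_eq_square)
    qed
  qed
  have "(\<Sum>j=1..n. (B j)^2 - B j) \<le> (B 0)^2 + 3 * B 0"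
    using ind by (simp add: ind_def self_int_def K0_dot_def sum_subtractf)
  moreover have "(B i)^2 - B i \<le> (\<Sum>j=1..n. (B j)^2 - B j)"
    by (rule member_le_sum) (use i nn in auto)
  ultimately have h: "(B i)^2 - B i \<le> (B 0)^2 + 3 * B 0" by linarith
  have p: "B 0 > 0" using B by (auto simp: U5_def dot_H_def)
  show ?thesis
  proof (rule ccontr)
    assume "\<not> ?thesis"
    then have "B i \<le> -(B 0 + 2)" by linarith
    then have "-(B i) \<ge> B 0 + 2" by linarith
    then have "(-(B i)) * (-(B i)) \<ge> (B 0 + 2) * (B 0 + 2)"
      using p by (intro mult_mono) auto
    moreover have "(B i)^2 = (-B i)*(-B i)" by (simp add: power2_eq_square)
    moreover have "(B 0)^2 = B 0 * B 0" by (simp add: power2_eq_square)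
    moreover have "(B 0 + 2)*(B 0+2) = B 0*B 0 + 4*B 0 + 4" by (simp add: algebra_simps)
    ultimately show False using h p \<open>-(B i) \<ge> B 0 + 2\<close> by linarith
  qed
qed

lemma ev_lb:
  assumes B: "B \<in> U5 n k" and c0: "c 0 \<ge> 2 * int n + 6"
    and c12: "\<And>i. i \<in> {1..n} \<Longrightarrow> 1 \<le> c i \<and> c i \<le> 2"
  shows "ev n c B \<ge> - 2 * int n"
proof -
  have p: "B 0 > 0" using B by (auto simp: U5_def dot_H_def)
  have "(\<Sum>i=1..n. c i * B i) \<ge> of_nat (card {1..n}) * (-2 * (B 0 + 1))"
  proof (rule sum_bounded_below)
    fix i assume i: "i \<in> {1..n}"
    have lb: "B i \<ge> -(B 0 + 1)" by (rule coord_lb[OF B i])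
    have "1 \<le> c i" "c i \<le> 2" using c12 i by auto
    then show "-2 * (B 0 + 1) \<le> c i * B i"
    proof (cases "B i \<ge> 0")
      case True
      have "0 \<le> c i * B i" using \<open>1 \<le> c i\<close> True by simp
      then show ?thesis using p by (simp add: algebra_simps)
    next
      case False
      then have "c i * B i \<ge> 2 * B i" using \<open>c i \<le> 2\<close> by (intro mult_right_mono_neg) auto
      moreover have "2 * (-(B 0 + 1)) \<le> 2 * B i" using lb by simp
      moreover have "-2 * (B 0 + 1) = 2 * (-(B 0 + 1))" by simp
      ultimately show ?thesis by (simp add: algebra_simps)
    qed
  qed
  then have s: "(\<Sum>i=1..n. c i * B i) \<ge> - 2 * int n * B 0 - 2 * int n" by (simp add: algebra_simps)
  have "c 0 * B 0 \<ge> (2 * int n + 6) * B 0" using c0 p by (intro mult_right_mono) auto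
  then show ?thesis using s p unfolding ev_def by (simp add: algebra_simps)
qed

lemma stab:
  fixes f :: "nat \<Rightarrow> int"
  assumes dec: "\<And>i. f (Suc i) \<le> f i" and lb: "\<And>i. f i \<ge> b"
  shows "\<exists>c. eventually (\<lambda>i. f i = c) sequentially"
proof -
  define g where "g i = nat (f i - b)" for i
  define m where "m = (LEAST v. \<exists>i. g i = v)"
  have "\<exists>i. g i = m" unfolding m_def by (rule LeastI) auto
  then obtain N where N: "g N = m" by blast
  have decm: "f j \<le> f i" if "i \<le> j" for i j
    using that by (induction j rule: dec_induct) (use dec order_trans in blast)+
  have "\<forall>i\<ge>N. f i = f N"
  proof (intro allI impI)
    fix i assume "N \<le> i"
    have "m \<le> g i" unfolding m_def by (rule Least_le) auto
    then have "f N \<le> f i" using N lb[of i] lb[of N] unfolding g_def by linarith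
    then show "f i = f N" using decm[OF \<open>N \<le> i\<close>] by linarith
  qed
  then show ?thesis unfolding eventually_sequentially by blast
qed

definition wc :: "nat \<Rightarrow> nat \<Rightarrow> nat \<Rightarrow> int" where
  "wc n j i = (if i = 0 then 2 * int n + 6 else if i \<le> j then 2 else 1)"

definition wc' :: "nat \<Rightarrow> nat \<Rightarrow> int" where
  "wc' n i = (if i = 0 then 2 * int n + 7 else 1)"

lemma ev_diff0: "ev n (wc' n) B - ev n (wc n 0) B = B 0"
  by (simp add: ev_def wc_def wc'_def algebra_simps)

lemma ev_diffj:
  assumes "j \<in> {1..n}"
  shows "ev n (wc n j) B - ev n (wc n (j - 1)) B = B j"
proof -
  have "ev n (wc n j) B - ev n (wc n (j - 1)) B = (\<Sum>i=1..n. (wc n j i - wc n (j-1) i) * B i)"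
    by (simp add: ev_def sum_subtractf algebra_simps wc_def)
  also have "\<dots> = (\<Sum>i=1..n. if i = j then B i else 0)"
    by (rule sum.cong) (use assms in \<open>auto simp: wc_def\<close>)
  also have "\<dots> = B j" using assms by simp
  finally show ?thesis .
qed

theorem lemma4p3:
  fixes n k :: nat and A :: "nat \<Rightarrow> (nat \<Rightarrow> int)"
  assumes "n \<ge> 1" and "k > 0"
    and "\<And>i. A i \<in> U5 n k"
    and "\<And>i. class_ge n (A i) (A (Suc i))"
  shows "\<exists>N. \<forall>i\<ge>N. A i = A N"
proof -
  have gen: "\<exists>v. eventually (\<lambda>i. ev n c (A i) = v) sequentially"
    if c0: "c 0 \<ge> 2 * int n + 6" and c12: "\<And>i. i \<in> {1..n} \<Longrightarrow> 1 \<le> c i \<and> c i \<le> 2"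
      and mono: "\<And>i. i \<in> {1..<n} \<Longrightarrow> c (Suc i) \<le> c i" for c
  proof (rule stab)
    have cone: "c1_nef_cone n (\<lambda>i. of_int (c i))"
      by (rule cone_ok[OF assms(1) c0 c12 mono])
    fix i
    have "omega_eval n (\<lambda>i. of_int (c i)) (A (Suc i)) \<le> omega_eval n (\<lambda>i. of_int (c i)) (A i)"
      using assms(4)[of i] cone unfolding class_ge_def by blast
    then show "ev n c (A (Suc i)) \<le> ev n c (A i)" by (simp add: omega_ev)
    show "ev n c (A i) \<ge> - 2 * int n" by (rule ev_lb[of "A i" n k c]) (use assms(3) c0 c12 in auto)
  qed
  have e1: "\<exists>v. eventually (\<lambda>i. ev n (wc n j) (A i) = v) sequentially" for j
    by (rule gen) (auto simp: wc_def)
  have e2: "\<exists>v. eventually (\<lambda>i. ev n (wc' n) (A i) = v) sequentially"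
    by (rule gen) (auto simp: wc'_def)
  have "\<forall>j. \<exists>v. eventually (\<lambda>i. ev n (wc n j) (A i) = v) sequentially"
    using e1 by blast
  from choice[OF this] obtain v where v: "\<And>j. eventually (\<lambda>i. ev n (wc n j) (A i) = v j) sequentially"
    by blast
  obtain v' where v': "eventually (\<lambda>i. ev n (wc' n) (A i) = v') sequentially"
    using e2 by blast
  have "eventually (\<lambda>i. \<forall>j\<in>{0..n}. ev n (wc n j) (A i) = v j) sequentially"
    by (rule eventually_ball_finite) (use v in auto)
  with v' have "eventually (\<lambda>i. ev n (wc' n) (A i) = v' \<and> (\<forall>j\<in>{0..n}. ev n (wc n j) (A i) = v j)) sequentially"
    by (rule eventually_conj)
  then obtain N where N: "\<And>i. i \<ge> N \<Longrightarrow> ev n (wc' n) (A i) = v' \<and> (\<forall>j\<in>{0..n}. ev n (wc n j) (A i) = v j)"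
    unfolding eventually_sequentially by blast
  have "A i = A N" if "i \<ge> N" for i
  proof
    fix j
    show "A i j = A N j"
    proof (cases "j = 0")
      case True
      have "ev n (wc n 0) (A i) = ev n (wc n 0) (A N)" "ev n (wc' n) (A i) = ev n (wc' n) (A N)"
        using N[OF that] N[of N] by auto
      then have "A i 0 = A N 0" using ev_diff0[of n "A i"] ev_diff0[of n "A N"] by linarith
      then show ?thesis using True by simp
    next
      case False
      show ?thesis
      proof (cases "j \<le> n")
        case True
        with False have j: "j \<in> {1..n}" by auto
        have j1: "j - 1 \<in> {0..n}" "j \<in> {0..n}" using j by auto
        have "ev n (wc n j) (A i) = ev n (wc n j) (A N)" "ev n (wc n (j-1)) (A i) = ev n (wc n (j-1)) (A N)"
          using N[OF that] N[of N] j1 by auto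
        then show ?thesis using ev_diffj[OF j, of "A i"] ev_diffj[OF j, of "A N"] by linarith
      next
        case False
        then show ?thesis using assms(3)[of i] assms(3)[of N] by (auto simp: U5_def is_class_def)
      qed
    qed
  qed
  then show ?thesis by blast
qed

end
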